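(* Let $\mathbb{F}\subset\mathbb{K}$ be fields of characteristic zero and let $a\colon\mathbb{F}\to\mathbb{K}$ be an additive mapping such that \[ 2a(x^{6})-9x^{2}a(x^{4})-4x^{3}a(x^{3})+36x^{4}a(x^{2})-36x^{5}a(x)=0\qquad(x\in\mathbb{F}). \] Then $a$ is a derivation of order $3$.
   Context: Derivations of higher order: the identically zero map is the only derivation of order $0$; for $m\ge1$, an additive map $d\colon\mathbb{F}\to\mathbb{K}$ is a derivation of order $m$ if there is a map $B\colon\mathbb{F}\times\mathbb{F}\to\mathbb{K}$ which is a derivation of order $m-1$ in each variable such that $d(xy)-xd(y)-d(x)y=B(x,y)$ for all $x,y\in\mathbb{F}$. *)

theory Defs
  imports Main
begin

text \<open>A subfield F of the ambient field 'a (the field K).\<close>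
definition is_subfield :: "'a::field set \<Rightarrow> bool" where
  "is_subfield F \<longleftrightarrow> 0 \<in> F \<and> 1 \<in> F \<and>
     (\<forall>x\<in>F. \<forall>y\<in>F. x + y \<in> F \<and> x * y \<in> F) \<and>
     (\<forall>x\<in>F. - x \<in> F) \<and> (\<forall>x\<in>F. x \<noteq> 0 \<longrightarrow> inverse x \<in> F)"

definition additive_on :: "'a::field set \<Rightarrow> ('a \<Rightarrow> 'a) \<Rightarrow> bool" where
  "additive_on F d \<longleftrightarrow> (\<forall>x\<in>F. \<forall>y\<in>F. d (x + y) = d x + d y)"

fun derivation_of_order :: "'a::field set \<Rightarrow> nat \<Rightarrow> ('a \<Rightarrow> 'a) \<Rightarrow> bool" where
  "derivation_of_order F 0 d = (\<forall>x\<in>F. d x = 0)"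
| "derivation_of_order F (Suc m) d =
     (additive_on F d \<and>
      (\<exists>B :: 'a \<Rightarrow> 'a \<Rightarrow> 'a.
         (\<forall>y\<in>F. derivation_of_order F m (\<lambda>x. B x y)) \<and>
         (\<forall>x\<in>F. derivation_of_order F m (\<lambda>y. B x y)) \<and>
         (\<forall>x\<in>F. \<forall>y\<in>F. d (x * y) - x * d y - d x * y = B x y)))"

end

theory Submission
  imports Defs
begin

locale L =
  fixes F :: "'a::field_char_0 set" and a :: "'a \<Rightarrow> 'a"
  assumes sf: "is_subfield F" and ad: "additive_on F a"
begin

lemma cl[simp]:
  "x \<in> F \<Longrightarrow> y \<in> F \<Longrightarrow> x + y \<in> F"
  "x \<in> F \<Longrightarrow> y \<in> F \<Longrightarrow> x * y \<in> F"
  "x \<in> F \<Longrightarrow> - x \<in> F"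
  "0 \<in> F" "1 \<in> F"
  using sf unfolding is_subfield_def by auto

lemma cl2[simp]:
  "x \<in> F \<Longrightarrow> y \<in> F \<Longrightarrow> x - y \<in> F"
  "x \<in> F \<Longrightarrow> x ^ n \<in> F"
  "of_nat n \<in> F"
proof -
  show "x \<in> F \<Longrightarrow> y \<in> F \<Longrightarrow> x - y \<in> F" using cl by (metis diff_conv_add_uminus)
  show "x \<in> F \<Longrightarrow> x ^ n \<in> F" by (induction n) auto
  show "of_nat n \<in> F" by (induction n) auto
qed

lemma clnum[simp]: "numeral k \<in> F"
  using cl2(3)[of "numeral k"] by simp

lemma aadd[simp]: "x \<in> F \<Longrightarrow> y \<in> F \<Longrightarrow> a (x + y) = a x + a y"
  using ad unfolding additive_on_def by auto

lemma a0[simp]: "a 0 = 0"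
  using aadd[of 0 0] by simp

lemma aneg[simp]: "x \<in> F \<Longrightarrow> a (- x) = - a x"
  using aadd[of x "-x"] by (simp add: eq_neg_iff_add_eq_0 add.commute)

lemma anat: "x \<in> F \<Longrightarrow> a (of_nat n * x) = of_nat n * a x"
  by (induction n) (auto simp: distrib_right)

lemma exp6: assumes "x \<in> F" shows "a ((x + of_nat n)^6) = a (x^6) + of_nat (6*n) * a (x^5) + of_nat (15*n^2) * a (x^4)
   + of_nat (20*n^3) * a (x^3) + of_nat (15*n^4) * a (x^2) + of_nat (6*n^5) * a x + of_nat (n^6) * a 1"
proof -
  have "(x + of_nat n)^6 = x^6 + of_nat (6*n) * x^5 + of_nat (15*n^2) * x^4
   + of_nat (20*n^3) * x^3 + of_nat (15*n^4) * x^2 + of_nat (6*n^5) * x + of_nat (n^6) * 1"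
    by (simp only: of_nat_mult of_nat_power of_nat_numeral) algebra
  then show ?thesis using assms by (simp only: aadd cl cl2 anat)
qed


lemma exp4: assumes "x \<in> F" shows "a ((x + of_nat n)^4) = a (x^4) + of_nat (4*n) * a (x^3) + of_nat (6*n^2) * a (x^2)
   + of_nat (4*n^3) * a x + of_nat (n^4) * a 1"
proof -
  have "(x + of_nat n)^4 = x^4 + of_nat (4*n) * x^3 + of_nat (6*n^2) * x^2
   + of_nat (4*n^3) * x + of_nat (n^4) * 1"
    by (simp only: of_nat_mult of_nat_power of_nat_numeral) algebra
  then show ?thesis using assms by (simp only: aadd cl cl2 anat)
qed

lemma exp3: assumes "x \<in> F" shows "a ((x + of_nat n)^3) = a (x^3) + of_nat (3*n) * a (x^2)
   + of_nat (3*n^2) * a x + of_nat (n^3) * a 1"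
proof -
  have "(x + of_nat n)^3 = x^3 + of_nat (3*n) * x^2 + of_nat (3*n^2) * x + of_nat (n^3) * 1"
    by (simp only: of_nat_mult of_nat_power of_nat_numeral) algebra
  then show ?thesis using assms by (simp only: aadd cl cl2 anat)
qed

lemma exp2: assumes "x \<in> F" shows "a ((x + of_nat n)^2) = a (x^2) + of_nat (2*n) * a x + of_nat (n^2) * a 1"
proof -
  have "(x + of_nat n)^2 = x^2 + of_nat (2*n) * x + of_nat (n^2) * 1"
    by (simp only: of_nat_mult of_nat_power of_nat_numeral) algebra
  then show ?thesis using assms by (simp only: aadd cl cl2 anat)
qed

lemma exp1: assumes "x \<in> F" shows "a (x + of_nat n) = a x + of_nat n * a 1"
proof -
  have "x + of_nat n = x + of_nat n * 1" by simp
  then show ?thesis using assms by (simp only: aadd cl cl2 anat)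
qed

lemma Pexp:
  assumes hyp: "\<forall>x\<in>F. 2 * a (x ^ 6) - 9 * x ^ 2 * a (x ^ 4) - 4 * x ^ 3 * a (x ^ 3)
                 + 36 * x ^ 4 * a (x ^ 2) - 36 * x ^ 5 * a x = 0"
    and x: "x \<in> F" and a1: "a 1 = 0" and T: "T = of_nat n"
  shows "2*(a(x^6) + 6*T*a(x^5) + 15*T^2*a(x^4) + 20*T^3*a(x^3) + 15*T^4*a(x^2) + 6*T^5*a x)
    - 9*(x+T)^2*(a(x^4) + 4*T*a(x^3) + 6*T^2*a(x^2)+4*T^3*a x)
    - 4*(x+T)^3*(a(x^3)+3*T*a(x^2) + 3*T^2*a x) + 36*(x+T)^4*(a(x^2) + 2*T*a x) - 36*(x+T)^5*a x = 0"
proof -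
  have "x + of_nat n \<in> F" using x by simp
  with hyp have "2 * a ((x + of_nat n) ^ 6) - 9 * (x + of_nat n) ^ 2 * a ((x + of_nat n) ^ 4) - 4 * (x + of_nat n) ^ 3 * a ((x + of_nat n) ^ 3)
                 + 36 * (x + of_nat n) ^ 4 * a ((x + of_nat n) ^ 2) - 36 * (x + of_nat n) ^ 5 * a (x + of_nat n) = 0" by blast
  then show ?thesis unfolding exp6[OF x] exp4[OF x] exp3[OF x] exp2[OF x] exp1[OF x] a1 T
    by (simp add: of_nat_mult of_nat_power)
qed

lemma Rzero:
  assumes hyp: "\<forall>x\<in>F. 2 * a (x ^ 6) - 9 * x ^ 2 * a (x ^ 4) - 4 * x ^ 3 * a (x ^ 3)
                 + 36 * x ^ 4 * a (x ^ 2) - 36 * x ^ 5 * a x = 0"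
    and x: "x \<in> F"
  shows "a (x^4) - 4*x*a(x^3) + 6*x^2*a(x^2) - 4*x^3*a x = 0"
proof -
  have "(-11) * a 1 = 0" using hyp[rule_format, of 1] by simp
  then have a1: "a 1 = 0" by simp
  define E where "E T = 2*(a(x^6) + 6*T*a(x^5) + 15*T^2*a(x^4) + 20*T^3*a(x^3) + 15*T^4*a(x^2) + 6*T^5*a x)
    - 9*(x+T)^2*(a(x^4) + 4*T*a(x^3) + 6*T^2*a(x^2)+4*T^3*a x)
    - 4*(x+T)^3*(a(x^3)+3*T*a(x^2) + 3*T^2*a x) + 36*(x+T)^4*(a(x^2) + 2*T*a x) - 36*(x+T)^5*a x" for T
  have e: "E (of_nat n) = 0" for n unfolding E_def using Pexp[OF hyp x a1] by blast
  have "7560 * (a (x^4) - 4*x*a(x^3) + 6*x^2*a(x^2) - 4*x^3*a x)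
     = 812*E 0 - 3132*E 1 + 5265*E 2 - 5080*E 3 + 2970*E 4 - 972*E 5 + 137*E 6"
    unfolding E_def by (simp add: eval_nat_numeral algebra_simps)
  also have "\<dots> = 0"
  proof -
    have "E 0 = 0" using e[of 0] by (simp only: of_nat_0)
    moreover have "E 1 = 0" using e[of 1] by (simp only: of_nat_1)
    moreover have "E 2 = 0" "E 3 = 0" "E 4 = 0" "E 5 = 0" "E 6 = 0"
      using e[of 2] e[of 3] e[of 4] e[of 5] e[of 6] by (simp_all only: of_nat_numeral)
    ultimately show ?thesis by (simp only: mult_zero_right diff_zero add_0_right diff_self)
  qed
  finally have h: "7560 * (a (x^4) - 4*x*a(x^3) + 6*x^2*a(x^2) - 4*x^3*a x) = 0" .
  then show ?thesis by (subst (asm) mult_eq_0_iff) simp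
qed


definition Phi where "Phi x y z w = a(x*y*z*w) - (w*a(x*y*z) + z*a(x*y*w) + y*a(x*z*w) + x*a(y*z*w))
  + (z*w*a(x*y) + y*w*a(x*z) + y*z*a(x*w) + x*w*a(y*z) + x*z*a(y*w) + x*y*a(z*w))
  - (y*z*w*a x + x*z*w*a y + x*y*w*a z + x*y*z*a w)"

lemma Phi_s12: "Phi x y z w = Phi y x z w" unfolding Phi_def by (simp add: ac_simps)
lemma Phi_s23: "Phi x y z w = Phi x z y w" unfolding Phi_def by (simp add: ac_simps)
lemma Phi_s34: "Phi x y z w = Phi x y w z" unfolding Phi_def by (simp add: ac_simps)

lemma Phi_add1: "x \<in> F \<Longrightarrow> x' \<in> F \<Longrightarrow> y \<in> F \<Longrightarrow> z \<in> F \<Longrightarrow> w \<in> F \<Longrightarrow>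
  Phi (x + x') y z w = Phi x y z w + Phi x' y z w"
  unfolding Phi_def by (simp add: distrib_left distrib_right algebra_simps)

lemma Phi_neg1: "x \<in> F \<Longrightarrow> y \<in> F \<Longrightarrow> z \<in> F \<Longrightarrow> w \<in> F \<Longrightarrow>
  Phi (- x) y z w = - Phi x y z w"
  unfolding Phi_def by (simp add: algebra_simps)


lemma Phi_add2: "x \<in> F \<Longrightarrow> x' \<in> F \<Longrightarrow> y \<in> F \<Longrightarrow> z \<in> F \<Longrightarrow> w \<in> F \<Longrightarrow>
  Phi y (x + x') z w = Phi y x z w + Phi y x' z w"
  by (metis Phi_add1 Phi_s12)
lemma Phi_add3: "x \<in> F \<Longrightarrow> x' \<in> F \<Longrightarrow> y \<in> F \<Longrightarrow> z \<in> F \<Longrightarrow> w \<in> F \<Longrightarrow>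
  Phi y z (x + x') w = Phi y z x w + Phi y z x' w"
  by (metis Phi_add2 Phi_s23)
lemma Phi_add4: "x \<in> F \<Longrightarrow> x' \<in> F \<Longrightarrow> y \<in> F \<Longrightarrow> z \<in> F \<Longrightarrow> w \<in> F \<Longrightarrow>
  Phi y z w (x + x') = Phi y z w x + Phi y z w x'"
  by (metis Phi_add3 Phi_s34)
lemma Phi_neg2: "x \<in> F \<Longrightarrow> y \<in> F \<Longrightarrow> z \<in> F \<Longrightarrow> w \<in> F \<Longrightarrow>
  Phi y (- x) z w = - Phi y x z w"
  by (metis Phi_neg1 Phi_s12)
lemma Phi_neg3: "x \<in> F \<Longrightarrow> y \<in> F \<Longrightarrow> z \<in> F \<Longrightarrow> w \<in> F \<Longrightarrow>
  Phi y z (- x) w = - Phi y z x w"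
  by (metis Phi_neg2 Phi_s23)
lemma Phi_neg4: "x \<in> F \<Longrightarrow> y \<in> F \<Longrightarrow> z \<in> F \<Longrightarrow> w \<in> F \<Longrightarrow>
  Phi y z w (- x) = - Phi y z w x"
  by (metis Phi_neg3 Phi_s34)

lemma Phi_two: "x \<in> F \<Longrightarrow> y \<in> F \<Longrightarrow> z \<in> F \<Longrightarrow> w \<in> F \<Longrightarrow>
  Phi (2*x) y z w = 2 * Phi x y z w"
  "x \<in> F \<Longrightarrow> y \<in> F \<Longrightarrow> z \<in> F \<Longrightarrow> w \<in> F \<Longrightarrow>
  Phi y (2*x) z w = 2 * Phi y x z w"
  "x \<in> F \<Longrightarrow> y \<in> F \<Longrightarrow> z \<in> F \<Longrightarrow> w \<in> F \<Longrightarrow>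
  Phi y z (2*x) w = 2 * Phi y z x w"
  "x \<in> F \<Longrightarrow> y \<in> F \<Longrightarrow> z \<in> F \<Longrightarrow> w \<in> F \<Longrightarrow>
  Phi y z w (2*x) = 2 * Phi y z w x"
  by (simp_all only: mult_2 Phi_add1 Phi_add2 Phi_add3 Phi_add4)

lemma Phi_diff:
  "x \<in> F \<Longrightarrow> x' \<in> F \<Longrightarrow> y \<in> F \<Longrightarrow> z \<in> F \<Longrightarrow> w \<in> F \<Longrightarrow>
  Phi (x - x') y z w = Phi x y z w - Phi x' y z w"
  "x \<in> F \<Longrightarrow> x' \<in> F \<Longrightarrow> y \<in> F \<Longrightarrow> z \<in> F \<Longrightarrow> w \<in> F \<Longrightarrow>
  Phi y (x - x') z w = Phi y x z w - Phi y x' z w"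
  "x \<in> F \<Longrightarrow> x' \<in> F \<Longrightarrow> y \<in> F \<Longrightarrow> z \<in> F \<Longrightarrow> w \<in> F \<Longrightarrow>
  Phi y z (x - x') w = Phi y z x w - Phi y z x' w"
  "x \<in> F \<Longrightarrow> x' \<in> F \<Longrightarrow> y \<in> F \<Longrightarrow> z \<in> F \<Longrightarrow> w \<in> F \<Longrightarrow>
  Phi y z w (x - x') = Phi y z w x - Phi y z w x'"
  by (simp_all only: diff_conv_add_uminus Phi_add1 Phi_add2 Phi_add3 Phi_add4 Phi_neg1 Phi_neg2 Phi_neg3 Phi_neg4 cl)

lemmas Phi_rules = Phi_diff Phi_two Phi_add1 Phi_add2 Phi_add3 Phi_add4 Phi_neg1 Phi_neg2 Phi_neg3 Phi_neg4
  Phi_s12 Phi_s23 Phi_s34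

lemma stepB:
  assumes R0: "\<And>u. u \<in> F \<Longrightarrow> Phi u u u u = 0" and x: "x \<in> F" and y: "y \<in> F"
  shows "Phi x x x y = 0"
proof -
  have 1: "Phi (x+y) (x+y) (x+y) (x+y) = 0" using R0 x y by simp
  have 2: "Phi (x+ -y) (x+ -y) (x+ -y) (x+ -y) = 0" using R0 x y by simp
  have 3: "Phi (x+2*y) (x+2*y) (x+2*y) (x+2*y) = 0" using R0 x y by simp
  have xx: "Phi x x x x = 0" "Phi y y y y = 0" using R0 x y by auto
  have e1: "4 * Phi x x x y + 6 * Phi x x y y + 4 * Phi x y y y = 0"
    using 1 x y xx by (simp add: Phi_rules; simp add: algebra_simps)
  have e2: "-4 * Phi x x x y + 6 * Phi x x y y - 4 * Phi x y y y = 0"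
    using 2 x y xx by (simp add: Phi_rules; simp add: algebra_simps)
  have e3: "8 * Phi x x x y + 24 * Phi x x y y + 32 * Phi x y y y = 0"
    using 3 x y xx by (simp add: Phi_rules; simp add: algebra_simps)
  have "24 * Phi x x x y = 6 * (4 * Phi x x x y + 6 * Phi x x y y + 4 * Phi x y y y)
     - 2 * (-4 * Phi x x x y + 6 * Phi x x y y - 4 * Phi x y y y)
     - (8 * Phi x x x y + 24 * Phi x x y y + 32 * Phi x y y y)" by (simp add: algebra_simps)
  then have "24 * Phi x x x y = 0" by (simp only: e1 e2 e3 mult_zero_right diff_zero diff_self)
  then show ?thesis by simp
qed


lemma stepC:
  assumes B: "\<And>u v. u \<in> F \<Longrightarrow> v \<in> F \<Longrightarrow> Phi u u u v = 0"
    and x: "x \<in> F" and y: "y \<in> F" and z: "z \<in> F"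
  shows "Phi x x z y = 0"
proof -
  have Bs: "Phi u u u v = 0" "Phi u u v u = 0" "Phi u v u u = 0" "Phi v u u u = 0"
    if "u \<in> F" "v \<in> F" for u v
    using B[OF that] by (metis Phi_s12 Phi_s23 Phi_s34)+
  have 1: "Phi (x+z) (x+z) (x+z) y = 0" using B x y z by simp
  have 2: "Phi (x-z) (x-z) (x-z) y = 0" using B x y z by simp
  have e1: "3 * Phi x x z y + 3 * Phi x z z y = 0"
    using x y z 1 by (simp add: Phi_rules; simp add: Bs; simp add: algebra_simps)
  have e2: "- 3 * Phi x x z y + 3 * Phi x z z y = 0"
    using x y z 2 by (simp add: Phi_rules; simp add: Bs; simp add: algebra_simps)
  have "6 * Phi x x z y = (3 * Phi x x z y + 3 * Phi x z z y) - (- 3 * Phi x x z y + 3 * Phi x z z y)"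
    by (simp add: algebra_simps)
  then have "6 * Phi x x z y = 0" by (simp only: e1 e2 diff_self)
  then show ?thesis by simp
qed

lemma stepD:
  assumes C: "\<And>u v w. u \<in> F \<Longrightarrow> v \<in> F \<Longrightarrow> w \<in> F \<Longrightarrow> Phi u u v w = 0"
    and x: "x \<in> F" and y: "y \<in> F" and z: "z \<in> F" and w: "w \<in> F"
  shows "Phi x y z w = 0"
proof -
  have Cs: "Phi u u v t = 0" "Phi u v u t = 0" "Phi u v t u = 0" "Phi v u u t = 0"
     "Phi v u t u = 0" "Phi v t u u = 0"
    if "u \<in> F" "v \<in> F" "t \<in> F" for u v t
    using C[OF that] C[OF that(1,3,2)] by (metis Phi_s12 Phi_s23 Phi_s34)+
  have 1: "Phi (x+y) (x+y) z w = 0" using C x y z w by simp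
  have e1: "2 * Phi x y z w = 0"
    using x y z w 1 by (simp add: Phi_rules; simp add: Cs; simp add: algebra_simps)
  then show ?thesis by simp
qed

lemma Phi_zero:
  assumes hyp: "\<forall>x\<in>F. 2 * a (x ^ 6) - 9 * x ^ 2 * a (x ^ 4) - 4 * x ^ 3 * a (x ^ 3)
                 + 36 * x ^ 4 * a (x ^ 2) - 36 * x ^ 5 * a x = 0"
    and x: "x \<in> F" and y: "y \<in> F" and z: "z \<in> F" and w: "w \<in> F"
  shows "Phi x y z w = 0"
proof -
  have R0: "Phi u u u u = 0" if "u \<in> F" for u
  proof -
    have "Phi u u u u = a (u^4) - 4*u*a(u^3) + 6*u^2*a(u^2) - 4*u^3*a u"
      unfolding Phi_def by (simp add: algebra_simps eval_nat_numeral)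
    then show ?thesis using Rzero[OF hyp that] by simp
  qed
  have B: "Phi u u u v = 0" if "u \<in> F" "v \<in> F" for u v using stepB[OF R0] that by blast
  have C: "Phi u u v t = 0" if "u \<in> F" "v \<in> F" "t \<in> F" for u v t
    using stepC[OF B] that by blast
  show ?thesis using stepD[OF C x y z w] by blast
qed


end

definition Dop :: "('a::field \<Rightarrow> 'a) \<Rightarrow> 'a \<Rightarrow> 'a \<Rightarrow> 'a" where
  "Dop f y = (\<lambda>x. f (x * y) - x * f y - f x * y)"

lemma ordSuc:
  assumes "additive_on F f" and "\<forall>y\<in>F. derivation_of_order F m (Dop f y)"
  shows "derivation_of_order F (Suc m) f"
proof -
  have eq: "(\<lambda>y. Dop f y x) = Dop f x" for x
    by (rule ext) (simp add: Dop_def ac_simps)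
  show ?thesis
    apply (simp only: derivation_of_order.simps)
    apply (rule conjI[OF assms(1)])
    apply (rule exI[of _ "\<lambda>x y. Dop f y x"])
    using assms(2) apply (simp add: eq)
    by (simp add: Dop_def)
qed

lemma (in L) addD: "additive_on F f \<Longrightarrow> y \<in> F \<Longrightarrow> additive_on F (Dop f y)"
  unfolding additive_on_def Dop_def by (simp add: distrib_right algebra_simps)

lemma (in L) DDD: "x \<in> F \<Longrightarrow> Dop (Dop (Dop a y1) y2) y3 x = Phi x y1 y2 y3"
  unfolding Dop_def Phi_def by (simp add: algebra_simps)

theorem mainTheorem3:
  fixes F :: "'a::field_char_0 set" and a :: "'a \<Rightarrow> 'a"
  assumes "is_subfield F"
    and "additive_on F a"
    and "\<forall>x\<in>F. 2 * a (x ^ 6) - 9 * x ^ 2 * a (x ^ 4) - 4 * x ^ 3 * a (x ^ 3)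
                 + 36 * x ^ 4 * a (x ^ 2) - 36 * x ^ 5 * a x = 0"
  shows "derivation_of_order F 3 a"
proof -
  interpret L F a using assms(1,2) by unfold_locales
  have A: "additive_on F a" by (rule assms(2))
  show ?thesis unfolding numeral_3_eq_3
  proof (rule ordSuc[OF A], intro ballI)
    fix y1 assume y1: "y1 \<in> F"
    show "derivation_of_order F (Suc (Suc 0)) (Dop a y1)"
    proof (rule ordSuc[OF addD[OF A y1]], intro ballI)
      fix y2 assume y2: "y2 \<in> F"
      show "derivation_of_order F (Suc 0) (Dop (Dop a y1) y2)"
      proof (rule ordSuc[OF addD[OF addD[OF A y1] y2]], intro ballI)
        fix y3 assume y3: "y3 \<in> F"
        show "derivation_of_order F 0 (Dop (Dop (Dop a y1) y2) y3)"
          using DDD Phi_zero[OF assms(3)] y1 y2 y3 by simp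
      qed
    qed
  qed
qed

end
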